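(* Let $F(x) = A\cos(px) + B\cos(qx)$ be a non-zero function, where $A, B \in \mathbb{R}$, $p$ and $q$ are coprime positive integers and $p + q$ is odd. Then \[ \min(\rho_+(F), \rho_-(F)) \geq \frac{1}{2} - \frac{1}{2(p+q)}. \]
   Context: For a continuous periodic function $F\colon \mathbb{R} \to \mathbb{R}$ with period $P > 0$, $\rho_+(F) = \lambda(\{x \in [0,P] : F(x) > 0\})/P$ and $\rho_-(F) = \lambda(\{x \in [0,P] : F(x) < 0\})/P$, where $\lambda$ is Lebesgue measure (independent of the choice of period). *)

theory Defs
  imports "HOL-Analysis.Analysis"
begin

definition rho_plus :: "(real \<Rightarrow> real) \<Rightarrow> real \<Rightarrow> real" where
  "rho_plus F P = measure lebesgue {x \<in> {0..P}. F x > 0} / P"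

definition rho_minus :: "(real \<Rightarrow> real) \<Rightarrow> real \<Rightarrow> real" where
  "rho_minus F P = measure lebesgue {x \<in> {0..P}. F x < 0} / P"

end

theory Submission
  imports Defs
begin
lemma trig_shift:
  fixes A B y :: real and p q j :: nat
  assumes "p + q > 0"
  shows "A * cos (real p * (y + 2*pi*real j/real (p+q))) + B * cos (real q * (y + 2*pi*real j/real (p+q)))
    = (A * cos (p*y) + B * cos (q*y)) * cos (2*pi*real (p*j)/real (p+q))
      + (B * sin (q*y) - A * sin (p*y)) * sin (2*pi*real (p*j)/real (p+q))"
proof -
  define w where "w = 2*pi*real (p*j)/real (p+q)"
  have e1: "real p * (y + 2*pi*real j/real (p+q)) = p*y + w"
    unfolding w_def by (simp add: field_simps)
  have e2: "real q * (y + 2*pi*real j/real (p+q)) = (q*y - w) + 2 * real j * pi"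
  proof -
    have N: "real p + real q \<noteq> 0" using assms by linarith
    show ?thesis unfolding w_def using N by (simp add: field_simps)
  qed
  have c: "cos (x + 2 * real j * pi) = cos x" for x
    by (simp add: cos_add)
  show ?thesis unfolding e1 e2 c w_def[symmetric]
    by (simp add: cos_add cos_diff algebra_simps)
qed

lemma count_lemma:
  fixes A B y :: real and p q :: nat
  assumes pq: "p > 0" "q > 0" "coprime p q" "odd (p + q)"
    and UV: "A * cos (p*y) + B * cos (q*y) \<noteq> 0 \<or> B * sin (q*y) - A * sin (p*y) \<noteq> 0"
  shows "(p + q - 1) div 2 \<le> card {j\<in>{..<p+q}. A * cos (real p * (y + 2*pi*real j/real (p+q))) + B * cos (real q * (y + 2*pi*real j/real (p+q))) > 0}"
proof -
  define N where "N = p + q"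
  define m where "m = (N - 1) div 2"
  define U where "U = A * cos (p*y) + B * cos (q*y)"
  define V where "V = B * sin (q*y) - A * sin (p*y)"
  define F where "F = (\<lambda>j::nat. A * cos (real p * (y + 2*pi*real j/real (p+q))) + B * cos (real q * (y + 2*pi*real j/real (p+q))))"
  have Npos: "N > 0" and Nr: "real N > 0" using pq unfolding N_def by auto
  have m2: "2 * m + 1 = N" using pq(4) unfolding m_def N_def by presburger
  define R where "R = sqrt (U^2 + V^2)"
  have UV0: "U^2 + V^2 > 0" using UV unfolding U_def V_def by (simp add: sum_power2_gt_zero_iff)
  hence Rpos: "R > 0" unfolding R_def by simp
  have R2: "R^2 = U^2 + V^2" unfolding R_def using UV0 by simp
  have "(U/R)^2 + (V/R)^2 = 1" using R2 UV0 by (auto simp add: power_divide add_divide_distrib[symmetric])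
  then obtain phi where ph: "U/R = cos phi" "V/R = sin phi" by (rule sincos_total_2pi)
  have Uc: "U = R * cos phi" and Vs: "V = R * sin phi" using ph Rpos by (auto simp: field_simps)
  have Fj: "F j = R * cos (2*pi*real (p*j)/real N - phi)" for j
  proof -
    have "F j = U * cos (2*pi*real (p*j)/real N) + V * sin (2*pi*real (p*j)/real N)"
      unfolding F_def N_def U_def V_def using trig_shift[where A=A and B=B and y=y and p=p and q=q and j=j] pq by simp
    thus ?thesis unfolding Uc Vs cos_diff by (simp add: algebra_simps)
  qed
  have key: "F j = R * cos (2*pi* of_int k/real N - phi)" if d: "int N dvd (int (p*j) - k)" for j k
  proof -
    obtain t where t: "int (p*j) - k = int N * t" using d unfolding dvd_def by blast
    have "2*pi*real (p*j)/real N - phi = (2*pi* of_int k/real N - phi) + (2*pi) * of_int t"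
    proof -
      have "int (p*j) = k + int N * t" using t by simp
      hence "real_of_int (int (p*j)) = real_of_int (k + int N * t)" by simp
      hence "real (p*j) = of_int k + real N * of_int t" by simp
      thus ?thesis using Nr by (simp add: field_simps)
    qed
    note e = this
    show ?thesis unfolding Fj e cos_add cos_int_2pin sin_int_2pin by simp
  qed
  obtain u v :: int where uv: "u * int p + v * int N = gcd (int p) (int N)" using bezout_int by blast
  have "coprime p N" unfolding N_def using pq(3) by (simp add: coprime_iff_gcd_eq_1)
  hence "gcd (int p) (int N) = 1" by (simp add: coprime_iff_gcd_eq_1 gcd_int_int_eq[symmetric])
  hence uv1: "u * int p + v * int N = 1" using uv by simp
  define jf where "jf = (\<lambda>k::int. nat ((k * u) mod int N))"
  have jfN: "jf k < N" for k unfolding jf_def using Npos by (simp add: nat_less_iff)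
  have jfd: "int N dvd (int (p * jf k) - k)" for k
  proof -
    have "int (p * jf k) = int p * ((k*u) mod int N)" unfolding jf_def using Npos by simp
    hence "int (p * jf k) mod int N = (int p * (k*u)) mod int N" by (metis mod_mult_right_eq)
    also have "int p * (k*u) = k * (1 - v * int N)" by (simp add: algebra_simps uv1[symmetric])
    also have "k * (1 - v * int N) = k + (- k * v) * int N" by (simp add: algebra_simps)
    also have "\<dots> mod int N = k mod int N" by (rule mod_mult_self1)
    finally show ?thesis by (simp add: mod_eq_dvd_iff)
  qed
  define lo where "lo = real N * (phi - pi/2) / (2*pi)"
  define a where "a = floor lo + 1"
  have pos: "F (jf k) > 0" if k: "k \<in> {a..<a + int m}" for k
  proof -
    have k1: "lo < of_int k" using k unfolding a_def by (simp) linarith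
    have "of_int k \<le> of_int (floor lo) + real m" using k unfolding a_def by simp
    hence k2: "of_int k < lo + real N / 2" using m2 by (simp, linarith)
    have "-(pi/2) < 2*pi* of_int k/real N - phi"
      using k1 Nr unfolding lo_def by (simp add: field_simps)
    moreover have "2*pi* of_int k/real N - phi < pi/2"
      using k2 Nr unfolding lo_def by (simp add: field_simps)
    ultimately have "cos (2*pi* of_int k/real N - phi) > 0" by (rule cos_gt_zero_pi)
    thus ?thesis using key[OF jfd[of k]] Rpos by simp
  qed
  have inj: "inj_on jf {a..<a + int m}"
  proof
    fix k1 k2 assume k: "k1 \<in> {a..<a + int m}" "k2 \<in> {a..<a + int m}" and e: "jf k1 = jf k2"
    have "int N dvd (int (p * jf k1) - k2)" using jfd[of k2] e by simp
    hence "int N dvd (int (p * jf k1) - k1) - (int (p * jf k1) - k2)" using jfd[of k1] by (rule dvd_diff[rotated])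
    hence d: "int N dvd (k2 - k1)" by simp
    show "k1 = k2"
    proof (rule ccontr)
      assume "k1 \<noteq> k2"
      hence "\<bar>int N\<bar> \<le> \<bar>k2 - k1\<bar>" using d by (intro dvd_imp_le_int) auto
      moreover have "\<bar>k2 - k1\<bar> < int N" using k m2 by auto
      ultimately show False by simp
    qed
  qed
  have sub: "jf ` {a..<a + int m} \<subseteq> {j\<in>{..<N}. F j > 0}" using pos jfN by auto
  have "m = card (jf ` {a..<a + int m})" using card_image[OF inj] by simp
  also have "\<dots> \<le> card {j\<in>{..<N}. F j > 0}" by (rule card_mono[OF _ sub]) simp
  finally show ?thesis unfolding m_def N_def F_def by simp
qed

lemma main_pos:
  fixes A B :: real and p q :: nat
  assumes pq: "p > 0" "q > 0" "coprime p q" "odd (p + q)"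
    and AB: "A \<noteq> 0 \<or> B \<noteq> 0"
  shows "measure lebesgue {x \<in> {0..2*pi}. A * cos (real p * x) + B * cos (real q * x) > 0}
          \<ge> real ((p + q - 1) div 2) * (2*pi/real (p+q))"
proof -
  define N where "N = p + q"
  define m where "m = (p + q - 1) div 2"
  define d where "d = 2*pi/real N"
  define F where "F = (\<lambda>x::real. A * cos (real p * x) + B * cos (real q * x))"
  define P where "P = {x. F x > 0}"
  define g where "g = (indicator P :: real \<Rightarrow> real)"
  have Nr: "real N > 0" using pq unfolding N_def by simp
  have dpos: "d > 0" unfolding d_def using Nr by simp
  have contF: "continuous_on UNIV F" unfolding F_def by (intro continuous_intros)
  have openP: "open P" unfolding P_def by (rule open_Collect_less[OF continuous_on_const contF])
  have Pleb: "P \<in> sets lebesgue" using openP by simp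
  have gint: "g integrable_on {a..b}" for a b
  proof -
    have "{a..b} \<inter> P \<in> lmeasurable" by (rule fmeasurable_Int_fmeasurable[OF _ Pleb]) simp
    hence "(\<lambda>x. 1::real) integrable_on (P \<inter> {a..b})" unfolding lmeasurable_iff_integrable_on by (simp add: Int_commute)
    hence "(\<lambda>x. if x \<in> P then 1::real else 0) integrable_on {a..b}" by (simp add: integrable_restrict_Int)
    moreover have "g = (\<lambda>x. if x \<in> P then 1::real else 0)" unfolding g_def by (auto simp: indicator_def fun_eq_iff)
    ultimately show ?thesis by simp
  qed
  have meas: "measure lebesgue {x \<in> {0..2*pi}. F x > 0} = integral {0..2*pi} g"
  proof -
    have eq: "{x \<in> {0..2*pi}. F x > 0} = P \<inter> {0..2*pi}" unfolding P_def by auto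
    have "P \<inter> {0..2*pi} \<in> lmeasurable" using fmeasurable_Int_fmeasurable[OF _ Pleb, of "{0..2*pi}"] by (simp add: Int_commute)
    hence "measure lebesgue (P \<inter> {0..2*pi}) = integral UNIV (indicator (P \<inter> {0..2*pi}))" by (rule lmeasure_integral_UNIV)
    also have "indicator (P \<inter> {0..2*pi}) = (\<lambda>x. if x \<in> {0..2*pi} then g x else (0::real))"
      unfolding g_def by (auto simp: indicator_def)
    also have "integral UNIV \<dots> = integral {0..2*pi} g" by (rule integral_restrict_UNIV)
    finally show ?thesis using eq by simp
  qed
  have comb: "(\<Sum>j<n. integral {real j*d..real (Suc j)*d} g) = integral {0..real n*d} g" for n
  proof (induction n)
    case 0 then show ?case by simp
  next
    case (Suc n)
    have "integral {0..real n*d} g + integral {real n*d..real (Suc n)*d} g = integral {0..real (Suc n)*d} g"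
      by (rule Henstock_Kurzweil_Integration.integral_combine) (use dpos gint in auto)
    thus ?case using Suc by simp
  qed
  define h where "h = (\<lambda>y. \<Sum>j<N. g (real j * d + y))"
  have shint: "(\<lambda>y. g (real j * d + y)) integrable_on {0..d}" for j
    using integrable_on_shift_Icc_real[of g "real j * d" 0 d] gint by (simp add: o_def add.commute)
  have shift: "integral {real j*d..real (Suc j)*d} g = integral {0..d} (\<lambda>y. g (real j * d + y))" for j
    using integral_shift_Icc_real[of 0 d g "real j * d"] by (simp add: o_def algebra_simps)
  have hint: "h integrable_on {0..d}" unfolding h_def by (intro integrable_sum) (use shint in auto)
  have inth: "integral {0..d} h = integral {0..2*pi} g"
  proof -
    have "integral {0..d} h = (\<Sum>j<N. integral {0..d} (\<lambda>y. g (real j * d + y)))"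
      unfolding h_def by (rule integral_sum) (use shint in auto)
    also have "\<dots> = integral {0..real N*d} g" using comb[of N] shift by simp
    also have "real N * d = 2*pi" unfolding d_def using Nr by simp
    finally show ?thesis .
  qed
  define E where "E = {y::real. A * cos (real p*y) + B * cos (real q*y) = 0 \<and> B * sin (real q*y) - A * sin (real p*y) = 0}"
  have negE: "negligible E"
  proof -
    have sub: "E \<subseteq> range (\<lambda>i::int. of_int i * pi / real N)"
    proof
      fix y assume "y \<in> E"
      hence U0: "A * cos (real p*y) + B * cos (real q*y) = 0" and V0: "B * sin (real q*y) - A * sin (real p*y) = 0"
        unfolding E_def by auto
      define a where "a = real p * y"
      define b where "b = real q * y"
      have e1: "B * sin (a + b) = sin a * (A * cos a + B * cos b) + cos a * (B * sin b - A * sin a)"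
        by (simp add: sin_add algebra_simps)
      have e2: "A + B * cos (a + b) = cos a * (A * cos a + B * cos b) - sin a * (B * sin b - A * sin a)"
      proof -
        have h: "A * (cos a * cos a) + A * (sin a * sin a) = A" by (metis sin_cos_squared_add3 distrib_left mult_1_right)
        show ?thesis using h by (simp add: cos_add algebra_simps)
      qed
      have s0: "B * sin (a + b) = 0" using e1 U0 V0 unfolding a_def b_def by simp
      have "A + B * cos (a + b) = 0" using e2 U0 V0 unfolding a_def b_def by simp
      hence "B \<noteq> 0" using AB by auto
      hence "sin (a + b) = 0" using s0 by simp
      moreover have "a + b = real N * y" unfolding a_def b_def N_def by (simp add: algebra_simps)
      ultimately obtain i :: int where "real N * y = of_int i * pi" using sin_zero_iff_int2 by metis
      hence "y = of_int i * pi / real N" using Nr by (simp add: field_simps)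
      thus "y \<in> range (\<lambda>i::int. of_int i * pi / real N)" by blast
    qed
    have "countable (range (\<lambda>i::int. of_int i * pi / real N))" by simp
    hence "countable E" using sub countable_subset by blast
    hence "E \<in> null_sets lborel" by (rule countable_imp_null_set_lborel)
    hence "E \<in> null_sets lebesgue" by (rule null_sets_completionI)
    thus ?thesis by (simp add: negligible_iff_null_sets)
  qed
  have hge: "real m \<le> h y" if yE: "y \<notin> E" for y
  proof -
    have "h y = (\<Sum>j<N. if F (y + 2*pi*real j/real N) > 0 then 1 else 0)"
      unfolding h_def g_def P_def indicator_def d_def
      by (intro sum.cong refl) (simp add: algebra_simps)
    also have "\<dots> = real (card {j\<in>{..<N}. F (y + 2*pi*real j/real N) > 0})"
      by (simp add: sum.inter_filter[symmetric])
    finally have hy: "h y = real (card {j\<in>{..<N}. F (y + 2*pi*real j/real N) > 0})" .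
    have "m \<le> card {j\<in>{..<N}. F (y + 2*pi*real j/real N) > 0}"
      unfolding m_def F_def N_def
      by (rule count_lemma[OF pq]) (use yE in \<open>auto simp: E_def\<close>)
    thus ?thesis unfolding hy by simp
  qed
  define h2 where "h2 = (\<lambda>y. if y \<in> E then real m else h y)"
  have "integral {0..d} h = integral {0..d} h2" by (rule integral_spike[OF negE]) (auto simp: h2_def)
  moreover have "h2 integrable_on {0..d}" by (rule integrable_spike[OF hint negE]) (auto simp: h2_def)
  hence "integral {0..d} (\<lambda>y. real m) \<le> integral {0..d} h2"
    by (intro integral_le) (auto simp: h2_def hge)
  ultimately have "real m * d \<le> integral {0..2*pi} g" using inth dpos by (simp add: mult.commute)
  thus ?thesis using meas unfolding F_def m_def d_def N_def by simp
qed

theorem theorem4: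
  fixes A B :: real and p q :: nat
  assumes "p > 0" "q > 0" "coprime p q" "odd (p + q)"
    and "(\<lambda>x. A * cos (real p * x) + B * cos (real q * x)) \<noteq> (\<lambda>x. 0)"
  shows "min (rho_plus (\<lambda>x. A * cos (real p * x) + B * cos (real q * x)) (2 * pi))
             (rho_minus (\<lambda>x. A * cos (real p * x) + B * cos (real q * x)) (2 * pi))
         \<ge> 1 / 2 - 1 / (2 * real (p + q))"
proof -
  have AB: "A \<noteq> 0 \<or> B \<noteq> 0" using assms(5) by auto
  have AB': "-A \<noteq> 0 \<or> -B \<noteq> 0" using AB by auto
  define N where "N = p + q"
  have Nr: "real N > 0" using assms unfolding N_def by simp
  have m2: "2 * ((p + q - 1) div 2) + 1 = N" using assms(4) unfolding N_def by presburger
  hence "real (2 * ((p + q - 1) div 2) + 1) = real N" by (simp only:)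
  hence mr: "real ((N - 1) div 2) = (real N - 1) / 2" unfolding N_def by simp
  have bound: "1 / 2 - 1 / (2 * real (p + q)) \<le> M / (2*pi)"
    if "M \<ge> real ((p + q - 1) div 2) * (2*pi/real (p+q))" for M
  proof -
    have "1 / 2 - 1 / (2 * real (p + q)) = real ((p + q - 1) div 2) * (2*pi/real (p+q)) / (2*pi)"
      unfolding N_def[symmetric] mr using Nr by (simp add: field_simps)
    also have "\<dots> \<le> M / (2*pi)" by (rule divide_right_mono[OF that]) simp
    finally show ?thesis .
  qed
  have p: "1 / 2 - 1 / (2 * real (p + q)) \<le> rho_plus (\<lambda>x. A * cos (real p * x) + B * cos (real q * x)) (2 * pi)"
    unfolding rho_plus_def by (rule bound[OF main_pos[OF assms(1-4) AB]])
  have eq: "{x \<in> {0..2*pi}. A * cos (real p * x) + B * cos (real q * x) < 0}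
     = {x \<in> {0..2*pi}. (-A) * cos (real p * x) + (-B) * cos (real q * x) > 0}" by auto
  have n: "1 / 2 - 1 / (2 * real (p + q)) \<le> rho_minus (\<lambda>x. A * cos (real p * x) + B * cos (real q * x)) (2 * pi)"
    unfolding rho_minus_def eq by (rule bound[OF main_pos[OF assms(1-4) AB']])
  show ?thesis using p n by simp
qed

end
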